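(* Let $n\ge 1$, let $R$ be a commutative ring, $\iota:\mu_n\to R^\times$ an injective group homomorphism (extended by $\iota(0)=0$), and $X\in R$ an $\mathbb{S}[\mu_{n,+}]$-generator of $R$. For $z=\sum_j\iota(\alpha_j)X^j\in R$ (its unique such decomposition) let $\deg(z)$ be the smallest integer $m$ such that $\alpha_j=0$ for all $j>m$. Then: (i) For $m\in\mathbb{N}$, let $J_m=X^mR$ be the ideal generated by $X^m$. Every $z\in R$ admits a unique decomposition $z=a+b$ with $\deg(a)<m$ (i.e. $a=\sum_{j<m}\iota(\alpha_j)X^j$) and $b\in J_m$. (ii) The quotient $R_m:=R/J_m$ is a finite ring whose elements are uniquely written as (the classes of) $\sum_{j=0}^{m-1}\iota(\alpha_j)X^j$ with $\alpha_j\in\mu_n\cup\{0\}$. (iii) The quotient $R_1=R/J_1$ is a finite field with $n+1$ elements, and $\iota:\mu_n\cup\{0\}\to R$ is a multiplicative section of the quotient map $R\to R_1$. (iv) The canonical ring homomorphism $\pi:R\to\varprojlim_m R_m$ is injective. (v) The pair $(R,X)$ is uniquely specified up to isomorphism by its hold $h$: precisely, if $(R',\iota',X')$ is another such triple (same $n$) whose hold equals the hold of $(R,\iota,X)$, then there is a ring isomorphism $\rho:R\to R'$ with $\rho(X)=X'$ and $\rho\circ\iota=\iota'$.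
   Context: $\mu_n$ is the group of $n$-th roots of unity, $\mu_{n,+}=\mu_n\cup\{0\}$. For a ring $A$ with injective homomorphism $\iota:\mu_n\to A^\times$ ($\iota(0):=0$), $X\in A$ is an $\mathbb{S}[\mu_{n,+}]$-generator if every $z\in A$ is uniquely a finite sum $\sum_j\iota(\alpha_j)X^j$, $\alpha_j\in\mu_n\cup\{0\}$. Let $\mathcal{P}(\mu_n)$ be the set of sequences $(\alpha_j)_{j\in\mathbb{N}}$ in $\mu_n\cup\{0\}$ with finitely many nonzero terms, and $\sigma:\mathcal{P}(\mu_n)\to A$, $\sigma((\alpha_j))=\sum_j\iota(\alpha_j)X^j$ (a bijection when $X$ is a generator). The hold of $(A,\iota,X)$ is the map $h:\mu_n\to\mathcal{P}(\mu_n)$ defined by $\sigma(h(\xi))=\iota(\xi)+1$ for $\xi\in\mu_n$. *)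

theory Defs
  imports Complex_Main "HOL-Algebra.Algebra"
begin

definition roots :: "nat \<Rightarrow> complex set" where
  "roots n = {z. z ^ n = 1}"

definition roots_plus :: "nat \<Rightarrow> complex set" where
  "roots_plus n = roots n \<union> {0}"

definition iota_p :: "('a, 'm) ring_scheme \<Rightarrow> (complex \<Rightarrow> 'a) \<Rightarrow> complex \<Rightarrow> 'a" where
  "iota_p R \<iota> \<alpha> = (if \<alpha> = 0 then \<zero>\<^bsub>R\<^esub> else \<iota> \<alpha>)"

definition Pseq :: "nat \<Rightarrow> (nat \<Rightarrow> complex) set" where
  "Pseq n = {\<alpha>. (\<forall>j. \<alpha> j \<in> roots_plus n) \<and> finite {j. \<alpha> j \<noteq> 0}}"

definition sigma :: "('a, 'm) ring_scheme \<Rightarrow> (complex \<Rightarrow> 'a) \<Rightarrow> 'a \<Rightarrow> (nat \<Rightarrow> complex) \<Rightarrow> 'a" where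
  "sigma R \<iota> T \<alpha> = (\<Oplus>\<^bsub>R\<^esub>j\<in>{j. \<alpha> j \<noteq> 0}. iota_p R \<iota> (\<alpha> j) \<otimes>\<^bsub>R\<^esub> T [^]\<^bsub>R\<^esub> j)"

definition is_generator :: "nat \<Rightarrow> ('a, 'm) ring_scheme \<Rightarrow> (complex \<Rightarrow> 'a) \<Rightarrow> 'a \<Rightarrow> bool" where
  "is_generator n R \<iota> T \<longleftrightarrow> T \<in> carrier R \<and>
     (\<forall>z \<in> carrier R. \<exists>!\<alpha>. \<alpha> \<in> Pseq n \<and> sigma R \<iota> T \<alpha> = z)"

definition setting :: "nat \<Rightarrow> ('a, 'm) ring_scheme \<Rightarrow> (complex \<Rightarrow> 'a) \<Rightarrow> 'a \<Rightarrow> bool" where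
  "setting n R \<iota> T \<longleftrightarrow> cring R \<and>
     \<iota> \<in> roots n \<rightarrow> Units R \<and> inj_on \<iota> (roots n) \<and>
     (\<forall>\<xi> \<in> roots n. \<forall>\<eta> \<in> roots n. \<iota> (\<xi> * \<eta>) = \<iota> \<xi> \<otimes>\<^bsub>R\<^esub> \<iota> \<eta>) \<and>
     is_generator n R \<iota> T"

definition coeffs :: "nat \<Rightarrow> ('a, 'm) ring_scheme \<Rightarrow> (complex \<Rightarrow> 'a) \<Rightarrow> 'a \<Rightarrow> 'a \<Rightarrow> (nat \<Rightarrow> complex)" where
  "coeffs n R \<iota> T z = (THE \<alpha>. \<alpha> \<in> Pseq n \<and> sigma R \<iota> T \<alpha> = z)"

definition deg_less :: "nat \<Rightarrow> ('a, 'm) ring_scheme \<Rightarrow> (complex \<Rightarrow> 'a) \<Rightarrow> 'a \<Rightarrow> 'a \<Rightarrow> nat \<Rightarrow> bool" where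
  "deg_less n R \<iota> T z m \<longleftrightarrow> (\<forall>j \<ge> m. coeffs n R \<iota> T z j = 0)"

definition hold :: "nat \<Rightarrow> ('a, 'm) ring_scheme \<Rightarrow> (complex \<Rightarrow> 'a) \<Rightarrow> 'a \<Rightarrow> complex \<Rightarrow> (nat \<Rightarrow> complex)" where
  "hold n R \<iota> T \<xi> = coeffs n R \<iota> T (\<iota> \<xi> \<oplus>\<^bsub>R\<^esub> \<one>\<^bsub>R\<^esub>)"

definition Jid :: "('a, 'm) ring_scheme \<Rightarrow> 'a \<Rightarrow> nat \<Rightarrow> 'a set" where
  "Jid R T m = {T [^]\<^bsub>R\<^esub> m \<otimes>\<^bsub>R\<^esub> r | r. r \<in> carrier R}"

text \<open>Carrier of the inverse limit of the R_m = R / J_m (compatible families of cosets).\<close>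
definition invlim :: "('a, 'm) ring_scheme \<Rightarrow> 'a \<Rightarrow> (nat \<Rightarrow> 'a set) set" where
  "invlim R T = {c. (\<forall>m. c m \<in> carrier (R Quot Jid R T m)) \<and>
       (\<forall>m. c (Suc m) \<subseteq> c m)}"

definition canon :: "('a, 'm) ring_scheme \<Rightarrow> 'a \<Rightarrow> 'a \<Rightarrow> nat \<Rightarrow> 'a set" where
  "canon R T z = (\<lambda>m. Jid R T m +>\<^bsub>R\<^esub> z)"

end

theory Submission
  imports Defs
begin


lemma roots_mult: "\<xi> \<in> roots n \<Longrightarrow> \<eta> \<in> roots n \<Longrightarrow> \<xi> * \<eta> \<in> roots n"
  by (simp add: roots_def power_mult_distrib)
lemma roots_div: "\<xi> \<in> roots n \<Longrightarrow> \<eta> \<in> roots n \<Longrightarrow> \<eta> / \<xi> \<in> roots n"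
  by (simp add: roots_def power_divide)
lemma roots_one: "1 \<in> roots n" by (simp add: roots_def)
lemma roots_nz: "1 \<le> n \<Longrightarrow> 0 \<notin> roots n" by (simp add: roots_def power_0_left)
lemma roots_plus_mult: "a \<in> roots_plus n \<Longrightarrow> b \<in> roots_plus n \<Longrightarrow> a * b \<in> roots_plus n"
  by (auto simp: roots_plus_def roots_mult)

definition shft :: "complex \<Rightarrow> (nat \<Rightarrow> complex) \<Rightarrow> nat \<Rightarrow> complex" where
  "shft c \<beta> = (\<lambda>j. case j of 0 \<Rightarrow> c | Suc k \<Rightarrow> \<beta> k)"

lemma Pseq_shft: assumes "c \<in> roots_plus n" "\<beta> \<in> Pseq n" shows "shft c \<beta> \<in> Pseq n"
proof -
  have "{j. shft c \<beta> j \<noteq> 0} \<subseteq> insert 0 (Suc ` {j. \<beta> j \<noteq> 0})"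
  proof
    fix x assume "x \<in> {j. shft c \<beta> j \<noteq> 0}" then show "x \<in> insert 0 (Suc ` {j. \<beta> j \<noteq> 0})"
      by (cases x) (auto simp: shft_def)
  qed
  moreover have "finite (insert 0 (Suc ` {j. \<beta> j \<noteq> 0}))" using assms by (simp add: Pseq_def)
  ultimately show ?thesis using assms
    by (auto simp: Pseq_def shft_def split: nat.splits intro: finite_subset)
qed

lemma Pseq_zero: "(\<lambda>_. 0) \<in> Pseq n" by (simp add: Pseq_def roots_plus_def)

locale gs = cring R for R :: "('a,'m) ring_scheme" (structure) +
  fixes n :: nat and \<iota> :: "complex \<Rightarrow> 'a" and T :: 'a
  assumes n1: "1 \<le> n" and iota_units: "\<iota> \<in> Defs.roots n \<rightarrow> Units R"
    and iota_inj: "inj_on \<iota> (Defs.roots n)"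
    and iota_mult: "\<And>\<xi> \<eta>. \<xi> \<in> Defs.roots n \<Longrightarrow> \<eta> \<in> Defs.roots n \<Longrightarrow> \<iota> (\<xi> * \<eta>) = \<iota> \<xi> \<otimes> \<iota> \<eta>"
    and gen: "is_generator n R \<iota> T"
begin

abbreviation "ip \<equiv> iota_p R \<iota>"
abbreviation "sig \<equiv> sigma R \<iota> T"
abbreviation "co \<equiv> coeffs n R \<iota> T"

lemma T_carr: "T \<in> carrier R" using gen by (simp add: is_generator_def)

lemma iota_carr: "\<xi> \<in> Defs.roots n \<Longrightarrow> \<iota> \<xi> \<in> carrier R"
  using iota_units by blast

lemma iota_one: "\<iota> 1 = \<one>"
proof -
  have u: "\<iota> 1 \<in> Units R" using iota_units roots_one by blast
  have "\<iota> 1 \<otimes> \<iota> 1 = \<iota> 1 \<otimes> \<one>" using iota_mult[OF roots_one roots_one] u by auto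
  then show ?thesis by (metis Units_closed Units_l_cancel one_closed u)
qed

lemma ip_zero[simp]: "ip 0 = \<zero>" by (simp add: iota_p_def)
lemma ip_nz: "c \<noteq> 0 \<Longrightarrow> ip c = \<iota> c" by (simp add: iota_p_def)

lemma ip_carr: "c \<in> roots_plus n \<Longrightarrow> ip c \<in> carrier R"
  by (auto simp: iota_p_def roots_plus_def iota_carr)

lemma ip_mult: "a \<in> roots_plus n \<Longrightarrow> b \<in> roots_plus n \<Longrightarrow> ip (a * b) = ip a \<otimes> ip b"
  by (auto simp: iota_p_def roots_plus_def iota_mult iota_carr)

lemma sig_term_carr: "\<alpha> \<in> Pseq n \<Longrightarrow> (\<lambda>j. ip (\<alpha> j) \<otimes> T [^] j) \<in> A \<rightarrow> carrier R"
  by (auto simp: Pseq_def intro!: ip_carr T_carr)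

lemma sig_carr: "\<alpha> \<in> Pseq n \<Longrightarrow> sig \<alpha> \<in> carrier R"
  unfolding sigma_def by (rule finsum_closed) (rule sig_term_carr)

lemma sig_atMost:
  assumes "\<alpha> \<in> Pseq n" "{j. \<alpha> j \<noteq> 0} \<subseteq> {..N}"
  shows "sig \<alpha> = (\<Oplus>j\<in>{..N}. ip (\<alpha> j) \<otimes> T [^] j)"
  unfolding sigma_def
  by (rule add.finprod_mono_neutral_cong_left) (use assms sig_term_carr[OF assms(1)] T_carr in auto)

lemma sig_zero: "sig (\<lambda>_. 0) = \<zero>" by (simp add: sigma_def)

lemma sig_shft:
  assumes c: "c \<in> roots_plus n" and b: "\<beta> \<in> Pseq n"
  shows "sig (shft c \<beta>) = ip c \<oplus> T \<otimes> sig \<beta>"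
proof -
  have fin: "finite {j. \<beta> j \<noteq> 0}" using b by (simp add: Pseq_def)
  obtain N where N: "{j. \<beta> j \<noteq> 0} \<subseteq> {..N}"
    using finite_nat_iff_bounded_le fin by (auto simp: atMost_def)
  have N2: "{j. shft c \<beta> j \<noteq> 0} \<subseteq> {..Suc N}"
  proof
    fix x assume "x \<in> {j. shft c \<beta> j \<noteq> 0}" then show "x \<in> {..Suc N}"
      using N by (cases x) (auto simp: shft_def)
  qed
  have sb: "shft c \<beta> \<in> Pseq n" by (rule Pseq_shft[OF c b])
  have "sig (shft c \<beta>) = (\<Oplus>j\<in>{..Suc N}. ip (shft c \<beta> j) \<otimes> T [^] j)"
    by (rule sig_atMost[OF sb N2])
  also have "\<dots> = (\<Oplus>j\<in>{..N}. ip (shft c \<beta> (Suc j)) \<otimes> T [^] (Suc j)) \<oplus> ip (shft c \<beta> 0) \<otimes> T [^] (0::nat)"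
    by (rule add.finprod_Suc2) (rule sig_term_carr[OF sb])
  also have "(\<Oplus>j\<in>{..N}. ip (shft c \<beta> (Suc j)) \<otimes> T [^] (Suc j)) = (\<Oplus>j\<in>{..N}. T \<otimes> (ip (\<beta> j) \<otimes> T [^] j))"
  proof (rule add.finprod_cong')
    show "ip (shft c \<beta> (Suc j)) \<otimes> T [^] Suc j = T \<otimes> (ip (\<beta> j) \<otimes> T [^] j)" if "j \<in> {..N}" for j
    proof -
      have "\<beta> j \<in> roots_plus n" using b by (simp add: Pseq_def)
      then show ?thesis using T_carr ip_carr by (simp add: shft_def m_ac)
    qed
  qed (use T_carr ip_carr b in \<open>auto simp: Pseq_def\<close>)
  also have "\<dots> = T \<otimes> (\<Oplus>j\<in>{..N}. ip (\<beta> j) \<otimes> T [^] j)"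
    by (rule finsum_rdistr[symmetric]) (use T_carr sig_term_carr[OF b] in auto)
  also have "(\<Oplus>j\<in>{..N}. ip (\<beta> j) \<otimes> T [^] j) = sig \<beta>"
    by (rule sig_atMost[OF b N, symmetric])
  finally show ?thesis using c b ip_carr sig_carr T_carr
    by (simp add: shft_def a_comm)
qed

lemma co_sig: "\<alpha> \<in> Pseq n \<Longrightarrow> co (sig \<alpha>) = \<alpha>"
proof -
  assume a: "\<alpha> \<in> Pseq n"
  have "\<exists>!\<beta>. \<beta> \<in> Pseq n \<and> sig \<beta> = sig \<alpha>" using gen sig_carr[OF a] by (simp add: is_generator_def)
  then show ?thesis unfolding coeffs_def by (rule the1_equality) (simp add: a)
qed

lemma co_Pseq: "z \<in> carrier R \<Longrightarrow> co z \<in> Pseq n \<and> sig (co z) = z"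
proof -
  assume z: "z \<in> carrier R"
  have "\<exists>!\<beta>. \<beta> \<in> Pseq n \<and> sig \<beta> = z" using gen z by (simp add: is_generator_def)
  then show ?thesis unfolding coeffs_def by (rule theI')
qed

lemma sig_inj: "\<alpha> \<in> Pseq n \<Longrightarrow> \<beta> \<in> Pseq n \<Longrightarrow> sig \<alpha> = sig \<beta> \<Longrightarrow> \<alpha> = \<beta>"
  by (metis co_sig)

lemma co_shft: assumes "c \<in> roots_plus n" "w \<in> carrier R"
  shows "co (ip c \<oplus> T \<otimes> w) = shft c (co w)"
  using co_Pseq[OF assms(2)] sig_shft[OF assms(1)] co_sig Pseq_shft[OF assms(1)] by metis

lemma decomp: assumes z: "z \<in> carrier R"
  shows "\<exists>c w. c \<in> roots_plus n \<and> w \<in> carrier R \<and> z = ip c \<oplus> T \<otimes> w"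
proof -
  let ?c = "co z 0" and ?b = "\<lambda>j. co z (Suc j)"
  have P: "co z \<in> Pseq n" "sig (co z) = z" using co_Pseq[OF z] by auto
  have c: "?c \<in> roots_plus n" using P by (simp add: Pseq_def)
  have "{j. ?b j \<noteq> 0} \<subseteq> (\<lambda>j. j - 1) ` {j. co z j \<noteq> 0}" by force
  then have b: "?b \<in> Pseq n" using P by (auto simp: Pseq_def intro: finite_subset)
  have "shft ?c ?b = co z" by (auto simp: shft_def split: nat.splits)
  then have "z = ip ?c \<oplus> T \<otimes> sig ?b" using sig_shft[OF c b] P by simp
  then show ?thesis using c sig_carr[OF b] by blast
qed

lemma head_unique:
  assumes "c \<in> roots_plus n" "c' \<in> roots_plus n" "w \<in> carrier R" "w' \<in> carrier R"
    "ip c \<oplus> T \<otimes> w = ip c' \<oplus> T \<otimes> w'"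
  shows "c = c' \<and> w = w'"
proof -
  have e: "shft c (co w) = shft c' (co w')" using co_shft assms by metis
  have "c = c'" using fun_cong[OF e, of 0] by (simp add: shft_def)
  moreover have "co w = co w'"
  proof
    fix j show "co w j = co w' j" using fun_cong[OF e, of "Suc j"] by (simp add: shft_def)
  qed
  ultimately have "c = c'" "co w = co w'" by auto
  then show ?thesis using co_Pseq assms by metis
qed


lemma Jid_eq: "Jid R T m = PIdl (T [^] m)"
proof -
  have c: "\<And>x. x \<in> carrier R \<Longrightarrow> x \<otimes> T [^] m = T [^] m \<otimes> x"
    by (rule m_comm) (auto simp: T_carr)
  show ?thesis unfolding Jid_def cgenideal_def
  proof (intro equalityI subsetI)
    fix x assume "x \<in> {T [^] m \<otimes> r |r. r \<in> carrier R}"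
    then obtain r where "r \<in> carrier R" "x = T [^] m \<otimes> r" by blast
    then show "x \<in> {y \<otimes> T [^] m |y. y \<in> carrier R}" using c[of r] by (intro CollectI exI[of _ r]) simp
  next
    fix x assume "x \<in> {y \<otimes> T [^] m |y. y \<in> carrier R}"
    then obtain r where "r \<in> carrier R" "x = r \<otimes> T [^] m" by blast
    then show "x \<in> {T [^] m \<otimes> r |r. r \<in> carrier R}" using c[of r] by (intro CollectI exI[of _ r]) simp
  qed
qed

lemma Jid_ideal: "ideal (Jid R T m) R"
  unfolding Jid_eq by (rule cgenideal_ideal) (simp add: T_carr)

lemma Jid_carr: "Jid R T m \<subseteq> carrier R"
  using Jid_ideal by (simp add: ideal_def additive_subgroup.a_subset)

lemma Jid_zero: "\<zero> \<in> Jid R T m"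
proof -
  have "\<zero> = T [^] m \<otimes> \<zero>" by (simp add: T_carr)
  then show ?thesis unfolding Jid_def by blast
qed

lemma Jid_0: "Jid R T 0 = carrier R"
proof -
  have "\<And>x. x \<in> carrier R \<Longrightarrow> x = \<one> \<otimes> x" by simp
  then show ?thesis unfolding Jid_def by force
qed

lemma Jid_Suc: "x \<in> Jid R T (Suc m) \<longleftrightarrow> (\<exists>y \<in> Jid R T m. x = T \<otimes> y)"
proof -
  have eq: "T [^] Suc m \<otimes> r = T \<otimes> (T [^] m \<otimes> r)" if "r \<in> carrier R" for r
    using that T_carr by (simp add: m_ac)
  show ?thesis
  proof
    assume "x \<in> Jid R T (Suc m)"
    then obtain r where r: "r \<in> carrier R" "x = T [^] Suc m \<otimes> r" by (auto simp: Jid_def)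
    have "T [^] m \<otimes> r \<in> Jid R T m" using r(1) unfolding Jid_def by blast
    then show "\<exists>y \<in> Jid R T m. x = T \<otimes> y" using eq[OF r(1)] r(2) by blast
  next
    assume "\<exists>y \<in> Jid R T m. x = T \<otimes> y"
    then obtain r where r: "r \<in> carrier R" "x = T \<otimes> (T [^] m \<otimes> r)" by (auto simp: Jid_def)
    have "x = T [^] Suc m \<otimes> r" using eq[OF r(1)] r(2) by simp
    then show "x \<in> Jid R T (Suc m)" using r(1) unfolding Jid_def by blast
  qed
qed

lemma Jid_mono: "Jid R T (Suc m) \<subseteq> Jid R T m"
proof
  fix x assume "x \<in> Jid R T (Suc m)"
  then obtain y where y: "y \<in> Jid R T m" "x = T \<otimes> y" using Jid_Suc by blast
  then show "x \<in> Jid R T m" using Jid_ideal T_carr by (simp add: ideal.I_l_closed)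
qed

lemma hd_add: "x \<in> carrier R \<Longrightarrow> w \<in> carrier R \<Longrightarrow> y \<in> carrier R \<Longrightarrow>
  (x \<oplus> T \<otimes> w) \<oplus> T \<otimes> y = x \<oplus> T \<otimes> (w \<oplus> y)"
  using T_carr by (simp add: r_distr a_assoc)

lemma co_zero: "co \<zero> = (\<lambda>_. 0)"
  using co_sig[OF Pseq_zero] sig_zero by simp

lemma deg_less_0: "z \<in> carrier R \<Longrightarrow> deg_less n R \<iota> T z 0 \<longleftrightarrow> z = \<zero>"
proof -
  assume z: "z \<in> carrier R"
  show ?thesis
  proof
    assume "deg_less n R \<iota> T z 0"
    then have "co z = (\<lambda>_. 0)" by (auto simp: deg_less_def)
    then show "z = \<zero>" using co_Pseq[OF z] sig_zero by metis
  qed (simp add: deg_less_def co_zero)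
qed

lemma deg_less_Suc:
  assumes "c \<in> roots_plus n" "w \<in> carrier R"
  shows "deg_less n R \<iota> T (ip c \<oplus> T \<otimes> w) (Suc m) \<longleftrightarrow> deg_less n R \<iota> T w m"
proof -
  have "(\<forall>j \<ge> Suc m. shft c (co w) j = 0) \<longleftrightarrow> (\<forall>j \<ge> m. co w j = 0)"
  proof
    assume h: "\<forall>j \<ge> Suc m. shft c (co w) j = 0"
    show "\<forall>j \<ge> m. co w j = 0"
    proof (intro allI impI)
      fix j assume "m \<le> j" then show "co w j = 0" using h[rule_format, of "Suc j"] by (simp add: shft_def)
    qed
  next
    assume h: "\<forall>j \<ge> m. co w j = 0"
    show "\<forall>j \<ge> Suc m. shft c (co w) j = 0"
    proof (intro allI impI)
      fix j assume "Suc m \<le> j" then show "shft c (co w) j = 0" using h by (cases j) (auto simp: shft_def)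
    qed
  qed
  then show ?thesis unfolding deg_less_def using co_shft[OF assms] by simp
qed

lemma part1_exist:
  "z \<in> carrier R \<Longrightarrow> \<exists>a b. a \<in> carrier R \<and> b \<in> Jid R T m \<and> z = a \<oplus> b \<and> deg_less n R \<iota> T a m"
proof (induction m arbitrary: z)
  case 0
  then show ?case by (intro exI[of _ \<zero>] exI[of _ z]) (simp add: Jid_0 deg_less_0)
next
  case (Suc m)
  obtain c w where cw: "c \<in> roots_plus n" "w \<in> carrier R" "z = ip c \<oplus> T \<otimes> w"
    using decomp[OF Suc.prems] by blast
  obtain a1 b1 where ab: "a1 \<in> carrier R" "b1 \<in> Jid R T m" "w = a1 \<oplus> b1" "deg_less n R \<iota> T a1 m"
    using Suc.IH[OF cw(2)] by blast
  have b1: "b1 \<in> carrier R" using ab Jid_carr by blast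
  have "z = (ip c \<oplus> T \<otimes> a1) \<oplus> T \<otimes> b1"
    unfolding cw(3) ab(3) by (rule hd_add[symmetric]) (use ab b1 ip_carr[OF cw(1)] in auto)
  moreover have "T \<otimes> b1 \<in> Jid R T (Suc m)" using ab Jid_Suc by blast
  moreover have "deg_less n R \<iota> T (ip c \<oplus> T \<otimes> a1) (Suc m)" using deg_less_Suc cw ab by blast
  moreover have "ip c \<oplus> T \<otimes> a1 \<in> carrier R" using ab T_carr ip_carr[OF cw(1)] by simp
  ultimately show ?case by blast
qed

lemma part1_uniq:
  "a \<in> carrier R \<Longrightarrow> a' \<in> carrier R \<Longrightarrow> b \<in> Jid R T m \<Longrightarrow> b' \<in> Jid R T m \<Longrightarrow>
   a \<oplus> b = a' \<oplus> b' \<Longrightarrow> deg_less n R \<iota> T a m \<Longrightarrow> deg_less n R \<iota> T a' m \<Longrightarrow> a = a' \<and> b = b'"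
proof (induction m arbitrary: a b a' b')
  case 0
  then have "a = \<zero>" "a' = \<zero>" using deg_less_0 by blast+
  moreover have "b \<in> carrier R" "b' \<in> carrier R" using 0 Jid_carr by blast+
  ultimately show ?case using 0(5) by simp
next
  case (Suc m)
  obtain c w where cw: "c \<in> roots_plus n" "w \<in> carrier R" "a = ip c \<oplus> T \<otimes> w"
    using decomp[OF Suc.prems(1)] by blast
  obtain c' w' where cw': "c' \<in> roots_plus n" "w' \<in> carrier R" "a' = ip c' \<oplus> T \<otimes> w'"
    using decomp[OF Suc.prems(2)] by blast
  obtain y where y: "y \<in> Jid R T m" "b = T \<otimes> y" using Suc.prems(3) Jid_Suc by blast
  obtain y' where y': "y' \<in> Jid R T m" "b' = T \<otimes> y'" using Suc.prems(4) Jid_Suc by blast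
  have yc: "y \<in> carrier R" "y' \<in> carrier R" using y y' Jid_carr by auto
  have dw: "deg_less n R \<iota> T w m" "deg_less n R \<iota> T w' m"
    using deg_less_Suc[OF cw(1) cw(2)] deg_less_Suc[OF cw'(1) cw'(2)] Suc.prems(6,7) cw(3) cw'(3) by simp_all
  have e1: "a \<oplus> b = ip c \<oplus> T \<otimes> (w \<oplus> y)" unfolding cw(3) y(2)
    by (rule hd_add) (use cw yc ip_carr[OF cw(1)] in auto)
  have e2: "a' \<oplus> b' = ip c' \<oplus> T \<otimes> (w' \<oplus> y')" unfolding cw'(3) y'(2)
    by (rule hd_add) (use cw' yc ip_carr[OF cw'(1)] in auto)
  have h: "c = c' \<and> w \<oplus> y = w' \<oplus> y'"
    by (rule head_unique) (use cw cw' yc e1 e2 Suc.prems(5) in auto)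
  have "w = w' \<and> y = y'" using Suc.IH[OF cw(2) cw'(2) y(1) y'(1) _ dw(1) dw(2)] h by blast
  then show ?case unfolding cw(3) cw'(3) y(2) y'(2) using h by simp
qed

end


context gs begin

lemma quot_carrier: "carrier (R Quot I) = (\<lambda>a. I +> a) ` carrier R"
  by (auto simp: FactRing_def A_RCOSETS_def')

abbreviation "D m \<equiv> {\<alpha> \<in> Pseq n. \<forall>j \<ge> m. \<alpha> j = 0}"

lemma deg_less_sig: "\<alpha> \<in> D m \<Longrightarrow> deg_less n R \<iota> T (sig \<alpha>) m"
  by (simp add: deg_less_def co_sig)

lemma part2_bij: "bij_betw (\<lambda>\<alpha>. Jid R T m +> sig \<alpha>) (D m) (carrier (R Quot Jid R T m))"
  unfolding bij_betw_def
proof (intro conjI)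
  show "inj_on (\<lambda>\<alpha>. Jid R T m +> sig \<alpha>) (D m)"
  proof (rule inj_onI)
    fix \<alpha> \<beta> assume a: "\<alpha> \<in> D m" and b: "\<beta> \<in> D m" and e: "Jid R T m +> sig \<alpha> = Jid R T m +> sig \<beta>"
    have ca: "sig \<alpha> \<in> carrier R" and cb: "sig \<beta> \<in> carrier R" using a b sig_carr by auto
    have d: "sig \<alpha> \<ominus> sig \<beta> \<in> Jid R T m"
      using quotient_eq_iff_same_a_r_cos[OF Jid_ideal ca cb] e by simp
    have eq: "sig \<alpha> \<oplus> \<zero> = sig \<beta> \<oplus> (sig \<alpha> \<ominus> sig \<beta>)" using ca cb by algebra
    have "sig \<alpha> = sig \<beta> \<and> \<zero> = sig \<alpha> \<ominus> sig \<beta>"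
      by (rule part1_uniq[OF ca cb Jid_zero d eq deg_less_sig[OF a] deg_less_sig[OF b]])
    then show "\<alpha> = \<beta>" using sig_inj a b by blast
  qed
next
  show "(\<lambda>\<alpha>. Jid R T m +> sig \<alpha>) ` D m = carrier (R Quot Jid R T m)"
  proof (intro equalityI subsetI)
    fix Y assume "Y \<in> (\<lambda>\<alpha>. Jid R T m +> sig \<alpha>) ` D m"
    then show "Y \<in> carrier (R Quot Jid R T m)" unfolding quot_carrier using sig_carr by blast
  next
    fix Y assume "Y \<in> carrier (R Quot Jid R T m)"
    then obtain z where z: "z \<in> carrier R" "Y = Jid R T m +> z" unfolding quot_carrier by blast
    obtain a b where ab: "a \<in> carrier R" "b \<in> Jid R T m" "z = a \<oplus> b" "deg_less n R \<iota> T a m"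
      using part1_exist[OF z(1)] by blast
    have bc: "b \<in> carrier R" using ab Jid_carr by blast
    have "z \<ominus> a = b" unfolding ab(3) using ab(1) bc by algebra
    then have "Jid R T m +> z = Jid R T m +> a"
      using quotient_eq_iff_same_a_r_cos[OF Jid_ideal z(1) ab(1)] ab(2) by simp
    moreover have "co a \<in> D m" "sig (co a) = a" using co_Pseq[OF ab(1)] ab(4) by (auto simp: deg_less_def)
    ultimately show "Y \<in> (\<lambda>\<alpha>. Jid R T m +> sig \<alpha>) ` D m" using z(2) by (metis (no_types, lifting) image_eqI)
  qed
qed

lemma finite_roots_plus: "finite (roots_plus n)"
  using finite_roots_unity[of n, where 'a=complex] n1 by (simp add: roots_plus_def Defs.roots_def)

lemma finite_D: "finite (D m)"
proof (rule inj_on_finite)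
  show "inj_on (\<lambda>\<alpha>. restrict \<alpha> {..<m}) (D m)"
  proof (rule inj_onI)
    fix \<alpha> \<beta> assume a: "\<alpha> \<in> D m" and b: "\<beta> \<in> D m" and e: "restrict \<alpha> {..<m} = restrict \<beta> {..<m}"
    show "\<alpha> = \<beta>"
    proof
      fix j show "\<alpha> j = \<beta> j"
      proof (cases "j < m")
        case True then show ?thesis using fun_cong[OF e, of j] by simp
      next
        case False then show ?thesis using a b by simp
      qed
    qed
  qed
  show "(\<lambda>\<alpha>. restrict \<alpha> {..<m}) ` D m \<subseteq> PiE {..<m} (\<lambda>_. roots_plus n)"
    by (auto simp: Pseq_def split: if_splits)
  show "finite (PiE {..<m} (\<lambda>_. roots_plus n))"
    by (rule finite_PiE) (auto simp: finite_roots_plus)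
qed

lemma part2: "ring (R Quot Jid R T m) \<and> finite (carrier (R Quot Jid R T m)) \<and>
   bij_betw (\<lambda>\<alpha>. Jid R T m +> sig \<alpha>) (D m) (carrier (R Quot Jid R T m))"
proof (intro conjI)
  show "ring (R Quot Jid R T m)" using Jid_ideal by (rule ideal.quotient_is_ring)
  show "finite (carrier (R Quot Jid R T m))"
    using part2_bij[of m] finite_D[of m] bij_betw_finite by blast
qed (rule part2_bij)

lemma one_notin_J1: "\<one> \<notin> Jid R T 1"
proof
  assume "\<one> \<in> Jid R T 1"
  then obtain y where y: "y \<in> Jid R T 0" "\<one> = T \<otimes> y" using Jid_Suc[of _ 0] by auto
  have yc: "y \<in> carrier R" using y Jid_0 by auto
  have "ip 1 \<oplus> T \<otimes> \<zero> = ip 0 \<oplus> T \<otimes> y"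
    using y(2) yc T_carr by (simp add: ip_nz iota_one)
  then have "(1::complex) = 0" using head_unique[of 1 0 "\<zero>" y] yc
    by (simp add: roots_plus_def roots_one)
  then show False by simp
qed

lemma J1_max: "maximalideal (Jid R T 1) R"
proof (rule maximalidealI)
  show "ideal (Jid R T 1) R" by (rule Jid_ideal)
  show "carrier R \<noteq> Jid R T 1" using one_notin_J1 by auto
next
  fix K assume K: "ideal K R" "Jid R T 1 \<subseteq> K" "K \<subseteq> carrier R"
  show "K = Jid R T 1 \<or> K = carrier R"
  proof (cases "K \<subseteq> Jid R T 1")
    case True then show ?thesis using K by blast
  next
    case False
    then obtain z where z: "z \<in> K" "z \<notin> Jid R T 1" by blast
    have zc: "z \<in> carrier R" using z K by blast
    obtain c w where cw: "c \<in> roots_plus n" "w \<in> carrier R" "z = ip c \<oplus> T \<otimes> w"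
      using decomp[OF zc] by blast
    have Tw: "T \<otimes> w \<in> Jid R T 1" using Jid_Suc[of _ 0] Jid_0 cw(2) by auto
    have c0: "c \<noteq> 0"
    proof
      assume "c = 0"
      then have "z = T \<otimes> w" using cw T_carr by simp
      then show False using z Tw by simp
    qed
    have cr: "c \<in> Defs.roots n" using cw(1) c0 by (simp add: roots_plus_def)
    have "ip c = z \<ominus> T \<otimes> w" using cw T_carr ip_carr[OF cw(1)] by algebra
    moreover have "z \<ominus> T \<otimes> w \<in> K"
      using K(1) z(1) K(2) Tw by (simp add: a_minus_def ideal.axioms(1) additive_subgroup.a_closed additive_subgroup.a_inv_closed subsetD)
    ultimately have icK: "\<iota> c \<in> K" using ip_nz[OF c0] by simp
    have u: "\<iota> c \<in> Units R" using iota_units cr by blast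
    have "inv (\<iota> c) \<otimes> \<iota> c \<in> K" using ideal.I_l_closed[OF K(1) icK] u by blast
    then have "\<one> \<in> K" using u by simp
    then show ?thesis using ideal.one_imp_carrier[OF K(1)] by blast
  qed
qed

definition e1 :: "complex \<Rightarrow> nat \<Rightarrow> complex" where "e1 c = shft c (\<lambda>_. 0)"

lemma sig_e1: "c \<in> roots_plus n \<Longrightarrow> sig (e1 c) = ip c"
  unfolding e1_def using sig_shft[OF _ Pseq_zero] sig_zero T_carr ip_carr by simp

lemma e1_bij: "bij_betw e1 (roots_plus n) (D 1)"
  unfolding bij_betw_def
proof (intro conjI)
  show "inj_on e1 (roots_plus n)"
  proof (rule inj_onI)
    fix a b assume eq: "e1 a = e1 b"
    have "e1 a 0 = e1 b 0" by (simp add: eq)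
    then show "a = b" by (simp add: e1_def shft_def)
  qed
  show "e1 ` roots_plus n = D 1"
  proof (intro equalityI subsetI)
    fix \<beta> assume "\<beta> \<in> e1 ` roots_plus n"
    then obtain c where c: "c \<in> roots_plus n" "\<beta> = e1 c" by blast
    have "\<beta> \<in> Pseq n" using Pseq_shft[OF c(1) Pseq_zero] c(2) by (simp add: e1_def)
    moreover have "\<forall>j\<ge>1. \<beta> j = 0"
    proof (intro allI impI)
      fix j :: nat assume "1 \<le> j" then show "\<beta> j = 0" using c(2) by (cases j) (auto simp: e1_def shft_def)
    qed
    ultimately show "\<beta> \<in> D 1" by blast
  next
    fix \<beta> assume b: "\<beta> \<in> D 1"
    have "\<beta> = e1 (\<beta> 0)"
    proof
      fix j show "\<beta> j = e1 (\<beta> 0) j" using b by (cases j) (auto simp: e1_def shft_def)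
    qed
    moreover have "\<beta> 0 \<in> roots_plus n" using b by (simp add: Pseq_def)
    ultimately show "\<beta> \<in> e1 ` roots_plus n" by blast
  qed
qed

lemma card_roots_plus: "card (roots_plus n) = n + 1"
proof -
  have "roots_plus n = insert 0 (Defs.roots n)" by (auto simp: roots_plus_def)
  moreover have "0 \<notin> Defs.roots n" using roots_nz n1 by blast
  moreover have "finite (Defs.roots n)" using finite_roots_plus by (simp add: roots_plus_def)
  moreover have "card (Defs.roots n) = n" using card_roots_unity_eq n1 by (simp add: Defs.roots_def)
  ultimately show ?thesis by simp
qed

lemma part3_bij: "bij_betw (\<lambda>\<alpha>. Jid R T 1 +> ip \<alpha>) (roots_plus n) (carrier (R Quot Jid R T 1))"
proof -
  have "bij_betw ((\<lambda>\<alpha>. Jid R T 1 +> sig \<alpha>) \<circ> e1) (roots_plus n) (carrier (R Quot Jid R T 1))"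
    by (rule bij_betw_trans[OF e1_bij part2_bij])
  moreover have "\<And>\<alpha>. \<alpha> \<in> roots_plus n \<Longrightarrow> ((\<lambda>\<alpha>. Jid R T 1 +> sig \<alpha>) \<circ> e1) \<alpha> = Jid R T 1 +> ip \<alpha>"
    by (simp add: sig_e1)
  then have "bij_betw (\<lambda>\<alpha>. Jid R T 1 +> ip \<alpha>) (roots_plus n) (carrier (R Quot Jid R T 1)) =
     bij_betw ((\<lambda>\<alpha>. Jid R T 1 +> sig \<alpha>) \<circ> e1) (roots_plus n) (carrier (R Quot Jid R T 1))"
    by (intro bij_betw_cong) simp
  ultimately show ?thesis by simp
qed

lemma part3: "field (R Quot Jid R T 1) \<and> card (carrier (R Quot Jid R T 1)) = n + 1 \<and>
        bij_betw (\<lambda>\<alpha>. Jid R T 1 +> ip \<alpha>) (roots_plus n) (carrier (R Quot Jid R T 1)) \<and>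
        (\<forall>\<alpha> \<in> roots_plus n. \<forall>\<beta> \<in> roots_plus n. ip (\<alpha> * \<beta>) = ip \<alpha> \<otimes> ip \<beta>)"
proof -
  have f: "field (R Quot Jid R T 1)" by (rule maximalideal.quotient_is_field[OF J1_max is_cring])
  have c: "card (carrier (R Quot Jid R T 1)) = n + 1"
    using bij_betw_same_card[OF part3_bij] card_roots_plus by simp
  have m: "\<forall>\<alpha> \<in> roots_plus n. \<forall>\<beta> \<in> roots_plus n. ip (\<alpha> * \<beta>) = ip \<alpha> \<otimes> ip \<beta>"
    using ip_mult by blast
  show ?thesis using f c m part3_bij by blast
qed

lemma Jinter: "w \<in> carrier R \<Longrightarrow> (\<forall>m. w \<in> Jid R T m) \<Longrightarrow> w = \<zero>"
proof -
  assume w: "w \<in> carrier R" and J: "\<forall>m. w \<in> Jid R T m"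
  have cw: "co w \<in> Pseq n" using co_Pseq[OF w] by blast
  have fin: "finite {j. co w j \<noteq> 0}" using cw unfolding Pseq_def by blast
  obtain N where N: "{j. co w j \<noteq> 0} \<subseteq> {..N}"
    using fin unfolding finite_nat_iff_bounded_le by blast
  have d: "deg_less n R \<iota> T w (Suc N)" unfolding deg_less_def
  proof (intro allI impI)
    fix j assume j: "Suc N \<le> j"
    have "j \<notin> {..N}" using j by simp
    then have "j \<notin> {j. co w j \<noteq> 0}" using N by blast
    then show "co w j = 0" by simp
  qed
  have d0: "deg_less n R \<iota> T \<zero> (Suc N)" by (simp add: deg_less_def co_zero)
  have e: "w \<oplus> \<zero> = \<zero> \<oplus> w" using w by simp
  have "w = \<zero> \<and> \<zero> = w" by (rule part1_uniq[OF w zero_closed Jid_zero J[rule_format] e d d0])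
  then show ?thesis by blast
qed

lemma part4: "canon R T \<in> carrier R \<rightarrow> invlim R T \<and> inj_on (canon R T) (carrier R)"
proof (intro conjI)
  show "canon R T \<in> carrier R \<rightarrow> invlim R T"
  proof
    fix z assume z: "z \<in> carrier R"
    have "Jid R T (Suc m) +> z \<subseteq> Jid R T m +> z" for m
      unfolding a_r_coset_def' using Jid_mono[of m] by blast
    then show "canon R T z \<in> invlim R T"
      unfolding canon_def invlim_def quot_carrier using z by blast
  qed
  show "inj_on (canon R T) (carrier R)"
  proof (rule inj_onI)
    fix x y assume x: "x \<in> carrier R" and y: "y \<in> carrier R" and e: "canon R T x = canon R T y"
    have "\<forall>m. x \<ominus> y \<in> Jid R T m"
    proof
      fix m
      have "Jid R T m +> x = Jid R T m +> y" using fun_cong[OF e, of m] by (simp add: canon_def)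
      then show "x \<ominus> y \<in> Jid R T m" using quotient_eq_iff_same_a_r_cos[OF Jid_ideal x y] by simp
    qed
    then have "x \<ominus> y = \<zero>" using Jinter x y by blast
    then show "x = y" using x y by simp
  qed
qed

end


context gs begin

lemma Pseq_scal: "\<xi> \<in> Defs.roots n \<Longrightarrow> \<alpha> \<in> Pseq n \<Longrightarrow> (\<lambda>j. \<xi> * \<alpha> j) \<in> Pseq n"
proof -
  assume x: "\<xi> \<in> Defs.roots n" and a: "\<alpha> \<in> Pseq n"
  have xnz: "\<xi> \<noteq> 0" using x roots_nz n1 by blast
  have "{j. \<xi> * \<alpha> j \<noteq> 0} = {j. \<alpha> j \<noteq> 0}" using xnz by simp
  moreover have "\<xi> * \<alpha> j \<in> roots_plus n" for j
    using roots_plus_mult[of \<xi> n "\<alpha> j"] x a by (simp add: roots_plus_def Pseq_def)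
  ultimately show ?thesis using a by (simp add: Pseq_def)
qed

lemma sig_scal: "\<xi> \<in> Defs.roots n \<Longrightarrow> \<alpha> \<in> Pseq n \<Longrightarrow> sig (\<lambda>j. \<xi> * \<alpha> j) = \<iota> \<xi> \<otimes> sig \<alpha>"
proof -
  assume x: "\<xi> \<in> Defs.roots n" and a: "\<alpha> \<in> Pseq n"
  have xnz: "\<xi> \<noteq> 0" using x roots_nz n1 by blast
  have S: "{j. \<xi> * \<alpha> j \<noteq> 0} = {j. \<alpha> j \<noteq> 0}" using xnz by simp
  have fin: "finite {j. \<alpha> j \<noteq> 0}" using a by (simp add: Pseq_def)
  have xr: "\<xi> \<in> roots_plus n" using x by (simp add: roots_plus_def)
  have "sig (\<lambda>j. \<xi> * \<alpha> j) = (\<Oplus>j\<in>{j. \<alpha> j \<noteq> 0}. \<iota> \<xi> \<otimes> (ip (\<alpha> j) \<otimes> T [^] j))"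
    unfolding sigma_def S
  proof (rule add.finprod_cong')
    show "ip (\<xi> * \<alpha> j) \<otimes> T [^] j = \<iota> \<xi> \<otimes> (ip (\<alpha> j) \<otimes> T [^] j)" if "j \<in> {j. \<alpha> j \<noteq> 0}" for j
    proof -
      have aj: "\<alpha> j \<in> roots_plus n" using a by (simp add: Pseq_def)
      have "ip (\<xi> * \<alpha> j) = \<iota> \<xi> \<otimes> ip (\<alpha> j)" using ip_mult[OF xr aj] ip_nz[OF xnz] by simp
      then show ?thesis using ip_carr[OF aj] iota_carr[OF x] T_carr by (simp add: m_assoc)
    qed
  qed (use iota_carr[OF x] sig_term_carr[OF a] in auto)
  also have "\<dots> = \<iota> \<xi> \<otimes> sig \<alpha>"
    unfolding sigma_def by (rule finsum_rdistr[symmetric]) (use fin iota_carr[OF x] sig_term_carr[OF a] in auto)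
  finally show ?thesis .
qed

lemma co_scal: "\<xi> \<in> Defs.roots n \<Longrightarrow> z \<in> carrier R \<Longrightarrow> co (\<iota> \<xi> \<otimes> z) = (\<lambda>j. \<xi> * co z j)"
  using sig_scal[of \<xi> "co z"] co_Pseq[of z] co_sig Pseq_scal by metis

end

locale gs2 = A: gs R n \<iota> T + B: gs R' n \<iota>' T'
  for R :: "('a,'m) ring_scheme" and n \<iota> T and R' :: "('b,'c) ring_scheme" and \<iota>' T' +
  assumes hold_eq: "\<forall>\<xi> \<in> Defs.roots n. hold n R' \<iota>' T' \<xi> = hold n R \<iota> T \<xi>"
begin

definition rho where "rho z = sigma R' \<iota>' T' (coeffs n R \<iota> T z)"

lemma rho_carr: "z \<in> carrier R \<Longrightarrow> rho z \<in> carrier R'"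
  unfolding rho_def using A.co_Pseq B.sig_carr by blast

lemma rho_hd: "c \<in> roots_plus n \<Longrightarrow> w \<in> carrier R \<Longrightarrow>
  rho (iota_p R \<iota> c \<oplus>\<^bsub>R\<^esub> T \<otimes>\<^bsub>R\<^esub> w) = iota_p R' \<iota>' c \<oplus>\<^bsub>R'\<^esub> T' \<otimes>\<^bsub>R'\<^esub> rho w"
  unfolding rho_def using A.co_shft B.sig_shft A.co_Pseq by metis

lemma rho_zero: "rho \<zero>\<^bsub>R\<^esub> = \<zero>\<^bsub>R'\<^esub>"
  unfolding rho_def A.co_zero B.sig_zero ..

lemma zero_rp: "0 \<in> roots_plus n" by (simp add: roots_plus_def)

lemma rho_T: "w \<in> carrier R \<Longrightarrow> rho (T \<otimes>\<^bsub>R\<^esub> w) = T' \<otimes>\<^bsub>R'\<^esub> rho w"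
proof -
  assume w: "w \<in> carrier R"
  have "T \<otimes>\<^bsub>R\<^esub> w = iota_p R \<iota> 0 \<oplus>\<^bsub>R\<^esub> T \<otimes>\<^bsub>R\<^esub> w" using w A.T_carr by simp
  then have "rho (T \<otimes>\<^bsub>R\<^esub> w) = iota_p R' \<iota>' 0 \<oplus>\<^bsub>R'\<^esub> T' \<otimes>\<^bsub>R'\<^esub> rho w"
    using rho_hd[OF zero_rp w] by simp
  then show ?thesis using B.T_carr rho_carr[OF w] by simp
qed

lemma rho_ip: "c \<in> roots_plus n \<Longrightarrow> rho (iota_p R \<iota> c) = iota_p R' \<iota>' c"
proof -
  assume c: "c \<in> roots_plus n"
  have "iota_p R \<iota> c = iota_p R \<iota> c \<oplus>\<^bsub>R\<^esub> T \<otimes>\<^bsub>R\<^esub> \<zero>\<^bsub>R\<^esub>" using A.ip_carr[OF c] A.T_carr by simp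
  then have "rho (iota_p R \<iota> c) = iota_p R' \<iota>' c \<oplus>\<^bsub>R'\<^esub> T' \<otimes>\<^bsub>R'\<^esub> rho \<zero>\<^bsub>R\<^esub>"
    using rho_hd[OF c A.zero_closed] by simp
  then show ?thesis using B.T_carr B.ip_carr[OF c] by (simp add: rho_zero)
qed

lemma rho_scal: "\<xi> \<in> Defs.roots n \<Longrightarrow> z \<in> carrier R \<Longrightarrow> rho (\<iota> \<xi> \<otimes>\<^bsub>R\<^esub> z) = \<iota>' \<xi> \<otimes>\<^bsub>R'\<^esub> rho z"
  unfolding rho_def using A.co_scal B.sig_scal A.co_Pseq by metis

lemma rho_ipmul: "a \<in> roots_plus n \<Longrightarrow> z \<in> carrier R \<Longrightarrow>
   rho (iota_p R \<iota> a \<otimes>\<^bsub>R\<^esub> z) = iota_p R' \<iota>' a \<otimes>\<^bsub>R'\<^esub> rho z"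
proof (cases "a = 0")
  case True
  assume z: "z \<in> carrier R"
  then show ?thesis using True rho_zero rho_carr[OF z] by simp
next
  case False
  assume a: "a \<in> roots_plus n" and z: "z \<in> carrier R"
  then have "a \<in> Defs.roots n" using False by (simp add: roots_plus_def)
  then show ?thesis using rho_scal z False by (simp add: iota_p_def)
qed

lemma rho_one: "rho \<one>\<^bsub>R\<^esub> = \<one>\<^bsub>R'\<^esub>"
proof -
  have "\<one>\<^bsub>R\<^esub> = iota_p R \<iota> 1" by (simp add: iota_p_def A.iota_one)
  moreover have "\<one>\<^bsub>R'\<^esub> = iota_p R' \<iota>' 1" by (simp add: iota_p_def B.iota_one)
  moreover have "(1::complex) \<in> roots_plus n" by (simp add: roots_plus_def roots_one)
  ultimately show ?thesis using rho_ip by simp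
qed

lemma rho_hold: "q \<in> Defs.roots n \<Longrightarrow> rho (\<iota> q \<oplus>\<^bsub>R\<^esub> \<one>\<^bsub>R\<^esub>) = \<iota>' q \<oplus>\<^bsub>R'\<^esub> \<one>\<^bsub>R'\<^esub>"
proof -
  assume q: "q \<in> Defs.roots n"
  have "rho (\<iota> q \<oplus>\<^bsub>R\<^esub> \<one>\<^bsub>R\<^esub>) = sigma R' \<iota>' T' (hold n R \<iota> T q)"
    unfolding rho_def hold_def ..
  also have "\<dots> = sigma R' \<iota>' T' (hold n R' \<iota>' T' q)" using hold_eq q by simp
  also have "\<dots> = \<iota>' q \<oplus>\<^bsub>R'\<^esub> \<one>\<^bsub>R'\<^esub>" unfolding hold_def
    using B.co_Pseq B.iota_carr[OF q] by simp
  finally show ?thesis .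
qed

lemma rho_two: "a \<in> roots_plus n \<Longrightarrow> b \<in> roots_plus n \<Longrightarrow>
   rho (iota_p R \<iota> a \<oplus>\<^bsub>R\<^esub> iota_p R \<iota> b) = iota_p R' \<iota>' a \<oplus>\<^bsub>R'\<^esub> iota_p R' \<iota>' b"
proof -
  assume a: "a \<in> roots_plus n" and b: "b \<in> roots_plus n"
  show ?thesis
  proof (cases "a = 0 \<or> b = 0")
    case True
    then show ?thesis using rho_ip a b A.ip_carr[OF a] A.ip_carr[OF b] B.ip_carr[OF a] B.ip_carr[OF b]
      by auto
  next
    case False
    then have ar: "a \<in> Defs.roots n" and br: "b \<in> Defs.roots n" using a b by (auto simp: roots_plus_def)
    define q where "q = b / a"
    have qr: "q \<in> Defs.roots n" unfolding q_def using roots_div[OF ar br] .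
    have abq: "a * q = b" using False by (simp add: q_def)
    have e1: "\<iota> b = \<iota> a \<otimes>\<^bsub>R\<^esub> \<iota> q" using A.iota_mult[OF ar qr] abq by simp
    have e2: "\<iota>' b = \<iota>' a \<otimes>\<^bsub>R'\<^esub> \<iota>' q" using B.iota_mult[OF ar qr] abq by simp
    have "iota_p R \<iota> a \<oplus>\<^bsub>R\<^esub> iota_p R \<iota> b = \<iota> a \<otimes>\<^bsub>R\<^esub> (\<iota> q \<oplus>\<^bsub>R\<^esub> \<one>\<^bsub>R\<^esub>)"
      using False e1 A.iota_carr[OF ar] A.iota_carr[OF qr]
      by (simp add: iota_p_def A.r_distr A.a_comm)
    then have "rho (iota_p R \<iota> a \<oplus>\<^bsub>R\<^esub> iota_p R \<iota> b) = \<iota>' a \<otimes>\<^bsub>R'\<^esub> (\<iota>' q \<oplus>\<^bsub>R'\<^esub> \<one>\<^bsub>R'\<^esub>)"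
      using rho_scal[OF ar] rho_hold[OF qr] A.iota_carr[OF qr] by simp
    also have "\<dots> = iota_p R' \<iota>' a \<oplus>\<^bsub>R'\<^esub> iota_p R' \<iota>' b"
      using False e2 B.iota_carr[OF ar] B.iota_carr[OF qr]
      by (simp add: iota_p_def B.r_distr B.a_comm)
    finally show ?thesis .
  qed
qed

end


context cring begin
lemma alg1: "C \<in> carrier R \<Longrightarrow> T \<in> carrier R \<Longrightarrow> P \<in> carrier R \<Longrightarrow> W \<in> carrier R \<Longrightarrow>
  U \<in> carrier R \<Longrightarrow> V2 \<in> carrier R \<Longrightarrow> Q \<in> carrier R \<Longrightarrow>
  (C \<oplus> T \<otimes> P) \<ominus> ((C \<oplus> T \<otimes> W) \<oplus> T \<otimes> (U \<oplus> V2)) = T \<otimes> ((P \<ominus> (W \<oplus> Q)) \<oplus> (Q \<ominus> (U \<oplus> V2)))"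
  by algebra
lemma alg2: "A \<in> carrier R \<Longrightarrow> B \<in> carrier R \<Longrightarrow> T \<in> carrier R \<Longrightarrow> U \<in> carrier R \<Longrightarrow> V2 \<in> carrier R \<Longrightarrow>
  (A \<oplus> T \<otimes> U) \<oplus> (B \<oplus> T \<otimes> V2) = (A \<oplus> B) \<oplus> T \<otimes> (U \<oplus> V2)"
  by algebra
lemma alg3: "C \<in> carrier R \<Longrightarrow> T \<in> carrier R \<Longrightarrow> W \<in> carrier R \<Longrightarrow> V \<in> carrier R \<Longrightarrow>
  (C \<oplus> T \<otimes> W) \<oplus> T \<otimes> V = C \<oplus> T \<otimes> (W \<oplus> V)"
  by algebra
lemma alg4: "A \<in> carrier R \<Longrightarrow> T \<in> carrier R \<Longrightarrow> U \<in> carrier R \<Longrightarrow> V2 \<in> carrier R \<Longrightarrow>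
  (A \<oplus> T \<otimes> U) \<otimes> V2 = A \<otimes> V2 \<oplus> T \<otimes> (U \<otimes> V2)"
  by algebra
lemma alg5: "A \<in> carrier R \<Longrightarrow> T \<in> carrier R \<Longrightarrow> U \<in> carrier R \<Longrightarrow> V2 \<in> carrier R \<Longrightarrow> P \<in> carrier R \<Longrightarrow>
  (A \<otimes> V2 \<oplus> T \<otimes> P) \<ominus> ((A \<oplus> T \<otimes> U) \<otimes> V2) = T \<otimes> (P \<ominus> U \<otimes> V2)"
  by algebra
end

context gs2 begin

lemma Jsum: "d1 \<in> Jid R' T' m \<Longrightarrow> d2 \<in> Jid R' T' m \<Longrightarrow> T' \<otimes>\<^bsub>R'\<^esub> (d1 \<oplus>\<^bsub>R'\<^esub> d2) \<in> Jid R' T' (Suc m)"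
proof -
  assume "d1 \<in> Jid R' T' m" "d2 \<in> Jid R' T' m"
  then have "d1 \<oplus>\<^bsub>R'\<^esub> d2 \<in> Jid R' T' m"
    using B.Jid_ideal by (simp add: ideal_def additive_subgroup.a_closed)
  then show ?thesis using B.Jid_Suc by blast
qed

lemma JT: "d1 \<in> Jid R' T' m \<Longrightarrow> T' \<otimes>\<^bsub>R'\<^esub> d1 \<in> Jid R' T' (Suc m)"
  using B.Jid_Suc by blast

lemma add_mod: "x \<in> carrier R \<Longrightarrow> y \<in> carrier R \<Longrightarrow>
   rho (x \<oplus>\<^bsub>R\<^esub> y) \<ominus>\<^bsub>R'\<^esub> (rho x \<oplus>\<^bsub>R'\<^esub> rho y) \<in> Jid R' T' m"
proof (induction m arbitrary: x y)
  case 0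
  then show ?case using rho_carr by (simp add: B.Jid_0)
next
  case (Suc m)
  obtain a x1 where ax: "a \<in> roots_plus n" "x1 \<in> carrier R" "x = iota_p R \<iota> a \<oplus>\<^bsub>R\<^esub> T \<otimes>\<^bsub>R\<^esub> x1"
    using A.decomp[OF Suc.prems(1)] by blast
  obtain b y1 where yb: "b \<in> roots_plus n" "y1 \<in> carrier R" "y = iota_p R \<iota> b \<oplus>\<^bsub>R\<^esub> T \<otimes>\<^bsub>R\<^esub> y1"
    using A.decomp[OF Suc.prems(2)] by blast
  have ia: "iota_p R \<iota> a \<in> carrier R" "iota_p R \<iota> b \<in> carrier R" using A.ip_carr ax yb by auto
  then have "iota_p R \<iota> a \<oplus>\<^bsub>R\<^esub> iota_p R \<iota> b \<in> carrier R" by simp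
  then obtain c w where cw: "c \<in> roots_plus n" "w \<in> carrier R"
    "iota_p R \<iota> a \<oplus>\<^bsub>R\<^esub> iota_p R \<iota> b = iota_p R \<iota> c \<oplus>\<^bsub>R\<^esub> T \<otimes>\<^bsub>R\<^esub> w"
    using A.decomp by blast
  have ic: "iota_p R \<iota> c \<in> carrier R" using A.ip_carr cw by auto
  have x1y1: "x1 \<oplus>\<^bsub>R\<^esub> y1 \<in> carrier R" using ax yb by simp
  have wv: "w \<oplus>\<^bsub>R\<^esub> (x1 \<oplus>\<^bsub>R\<^esub> y1) \<in> carrier R" using cw x1y1 by simp
  have "x \<oplus>\<^bsub>R\<^esub> y = (iota_p R \<iota> a \<oplus>\<^bsub>R\<^esub> iota_p R \<iota> b) \<oplus>\<^bsub>R\<^esub> T \<otimes>\<^bsub>R\<^esub> (x1 \<oplus>\<^bsub>R\<^esub> y1)"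
    unfolding ax(3) yb(3) by (rule A.alg2) (use ia ax yb A.T_carr in auto)
  also have "\<dots> = iota_p R \<iota> c \<oplus>\<^bsub>R\<^esub> T \<otimes>\<^bsub>R\<^esub> (w \<oplus>\<^bsub>R\<^esub> (x1 \<oplus>\<^bsub>R\<^esub> y1))"
    unfolding cw(3) by (rule A.alg3) (use ic cw x1y1 A.T_carr in auto)
  finally have xy: "x \<oplus>\<^bsub>R\<^esub> y = iota_p R \<iota> c \<oplus>\<^bsub>R\<^esub> T \<otimes>\<^bsub>R\<^esub> (w \<oplus>\<^bsub>R\<^esub> (x1 \<oplus>\<^bsub>R\<^esub> y1))" .
  have r1: "rho (x \<oplus>\<^bsub>R\<^esub> y) = iota_p R' \<iota>' c \<oplus>\<^bsub>R'\<^esub> T' \<otimes>\<^bsub>R'\<^esub> rho (w \<oplus>\<^bsub>R\<^esub> (x1 \<oplus>\<^bsub>R\<^esub> y1))"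
    unfolding xy by (rule rho_hd[OF cw(1) wv])
  have r2: "iota_p R' \<iota>' c \<oplus>\<^bsub>R'\<^esub> T' \<otimes>\<^bsub>R'\<^esub> rho w = iota_p R' \<iota>' a \<oplus>\<^bsub>R'\<^esub> iota_p R' \<iota>' b"
    using rho_hd[OF cw(1) cw(2)] rho_two[OF ax(1) yb(1)] cw(3) by simp
  have r3: "rho x = iota_p R' \<iota>' a \<oplus>\<^bsub>R'\<^esub> T' \<otimes>\<^bsub>R'\<^esub> rho x1" unfolding ax(3) by (rule rho_hd[OF ax(1) ax(2)])
  have r4: "rho y = iota_p R' \<iota>' b \<oplus>\<^bsub>R'\<^esub> T' \<otimes>\<^bsub>R'\<^esub> rho y1" unfolding yb(3) by (rule rho_hd[OF yb(1) yb(2)])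
  have ib: "iota_p R' \<iota>' a \<in> carrier R'" "iota_p R' \<iota>' b \<in> carrier R'" "iota_p R' \<iota>' c \<in> carrier R'"
    using B.ip_carr ax yb cw by auto
  have rc: "rho x1 \<in> carrier R'" "rho y1 \<in> carrier R'" "rho w \<in> carrier R'"
    "rho (x1 \<oplus>\<^bsub>R\<^esub> y1) \<in> carrier R'" "rho (w \<oplus>\<^bsub>R\<^esub> (x1 \<oplus>\<^bsub>R\<^esub> y1)) \<in> carrier R'"
    using rho_carr ax yb cw x1y1 wv by auto
  have "rho x \<oplus>\<^bsub>R'\<^esub> rho y = (iota_p R' \<iota>' a \<oplus>\<^bsub>R'\<^esub> iota_p R' \<iota>' b) \<oplus>\<^bsub>R'\<^esub> T' \<otimes>\<^bsub>R'\<^esub> (rho x1 \<oplus>\<^bsub>R'\<^esub> rho y1)"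
    unfolding r3 r4 by (rule B.alg2) (use ib rc B.T_carr in auto)
  also have "\<dots> = (iota_p R' \<iota>' c \<oplus>\<^bsub>R'\<^esub> T' \<otimes>\<^bsub>R'\<^esub> rho w) \<oplus>\<^bsub>R'\<^esub> T' \<otimes>\<^bsub>R'\<^esub> (rho x1 \<oplus>\<^bsub>R'\<^esub> rho y1)"
    unfolding r2 ..
  finally have s: "rho x \<oplus>\<^bsub>R'\<^esub> rho y = (iota_p R' \<iota>' c \<oplus>\<^bsub>R'\<^esub> T' \<otimes>\<^bsub>R'\<^esub> rho w) \<oplus>\<^bsub>R'\<^esub> T' \<otimes>\<^bsub>R'\<^esub> (rho x1 \<oplus>\<^bsub>R'\<^esub> rho y1)" .
  have key: "rho (x \<oplus>\<^bsub>R\<^esub> y) \<ominus>\<^bsub>R'\<^esub> (rho x \<oplus>\<^bsub>R'\<^esub> rho y) =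
    T' \<otimes>\<^bsub>R'\<^esub> ((rho (w \<oplus>\<^bsub>R\<^esub> (x1 \<oplus>\<^bsub>R\<^esub> y1)) \<ominus>\<^bsub>R'\<^esub> (rho w \<oplus>\<^bsub>R'\<^esub> rho (x1 \<oplus>\<^bsub>R\<^esub> y1)))
      \<oplus>\<^bsub>R'\<^esub> (rho (x1 \<oplus>\<^bsub>R\<^esub> y1) \<ominus>\<^bsub>R'\<^esub> (rho x1 \<oplus>\<^bsub>R'\<^esub> rho y1)))"
    unfolding r1 s by (rule B.alg1) (use ib rc B.T_carr in auto)
  show ?case unfolding key
    by (rule Jsum) (rule Suc.IH; use wv cw x1y1 ax yb in auto)+
qed

lemma rho_add: "x \<in> carrier R \<Longrightarrow> y \<in> carrier R \<Longrightarrow> rho (x \<oplus>\<^bsub>R\<^esub> y) = rho x \<oplus>\<^bsub>R'\<^esub> rho y"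
proof -
  assume x: "x \<in> carrier R" and y: "y \<in> carrier R"
  have c: "rho (x \<oplus>\<^bsub>R\<^esub> y) \<ominus>\<^bsub>R'\<^esub> (rho x \<oplus>\<^bsub>R'\<^esub> rho y) \<in> carrier R'"
    using rho_carr x y by simp
  have "rho (x \<oplus>\<^bsub>R\<^esub> y) \<ominus>\<^bsub>R'\<^esub> (rho x \<oplus>\<^bsub>R'\<^esub> rho y) = \<zero>\<^bsub>R'\<^esub>"
    using B.Jinter[OF c] add_mod[OF x y] by blast
  then show ?thesis using rho_carr x y by (simp add: B.r_right_minus_eq)
qed

lemma mul_mod: "x \<in> carrier R \<Longrightarrow> y \<in> carrier R \<Longrightarrow>
   rho (x \<otimes>\<^bsub>R\<^esub> y) \<ominus>\<^bsub>R'\<^esub> (rho x \<otimes>\<^bsub>R'\<^esub> rho y) \<in> Jid R' T' m"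
proof (induction m arbitrary: x y)
  case 0
  then show ?case using rho_carr by (simp add: B.Jid_0)
next
  case (Suc m)
  obtain a x1 where ax: "a \<in> roots_plus n" "x1 \<in> carrier R" "x = iota_p R \<iota> a \<oplus>\<^bsub>R\<^esub> T \<otimes>\<^bsub>R\<^esub> x1"
    using A.decomp[OF Suc.prems(1)] by blast
  have y: "y \<in> carrier R" by (rule Suc.prems(2))
  have ia: "iota_p R \<iota> a \<in> carrier R" using A.ip_carr ax by auto
  have ib: "iota_p R' \<iota>' a \<in> carrier R'" using B.ip_carr ax by auto
  have xy: "x \<otimes>\<^bsub>R\<^esub> y = iota_p R \<iota> a \<otimes>\<^bsub>R\<^esub> y \<oplus>\<^bsub>R\<^esub> T \<otimes>\<^bsub>R\<^esub> (x1 \<otimes>\<^bsub>R\<^esub> y)"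
    unfolding ax(3) by (rule A.alg4) (use ia ax y A.T_carr in auto)
  have r1: "rho (x \<otimes>\<^bsub>R\<^esub> y) = iota_p R' \<iota>' a \<otimes>\<^bsub>R'\<^esub> rho y \<oplus>\<^bsub>R'\<^esub> T' \<otimes>\<^bsub>R'\<^esub> rho (x1 \<otimes>\<^bsub>R\<^esub> y)"
    unfolding xy using rho_add[of "iota_p R \<iota> a \<otimes>\<^bsub>R\<^esub> y" "T \<otimes>\<^bsub>R\<^esub> (x1 \<otimes>\<^bsub>R\<^esub> y)"]
      rho_ipmul[OF ax(1) y] rho_T[of "x1 \<otimes>\<^bsub>R\<^esub> y"] ia ax y A.T_carr by simp
  have r3: "rho x = iota_p R' \<iota>' a \<oplus>\<^bsub>R'\<^esub> T' \<otimes>\<^bsub>R'\<^esub> rho x1" unfolding ax(3) by (rule rho_hd[OF ax(1) ax(2)])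
  have key: "rho (x \<otimes>\<^bsub>R\<^esub> y) \<ominus>\<^bsub>R'\<^esub> (rho x \<otimes>\<^bsub>R'\<^esub> rho y) =
     T' \<otimes>\<^bsub>R'\<^esub> (rho (x1 \<otimes>\<^bsub>R\<^esub> y) \<ominus>\<^bsub>R'\<^esub> rho x1 \<otimes>\<^bsub>R'\<^esub> rho y)"
    unfolding r1 r3 by (rule B.alg5) (use ib rho_carr ax y B.T_carr in auto)
  show ?case unfolding key by (rule JT) (rule Suc.IH; use ax y in auto)
qed

lemma rho_mul: "x \<in> carrier R \<Longrightarrow> y \<in> carrier R \<Longrightarrow> rho (x \<otimes>\<^bsub>R\<^esub> y) = rho x \<otimes>\<^bsub>R'\<^esub> rho y"
proof -
  assume x: "x \<in> carrier R" and y: "y \<in> carrier R"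
  have c: "rho (x \<otimes>\<^bsub>R\<^esub> y) \<ominus>\<^bsub>R'\<^esub> (rho x \<otimes>\<^bsub>R'\<^esub> rho y) \<in> carrier R'"
    using rho_carr x y by simp
  have "rho (x \<otimes>\<^bsub>R\<^esub> y) \<ominus>\<^bsub>R'\<^esub> (rho x \<otimes>\<^bsub>R'\<^esub> rho y) = \<zero>\<^bsub>R'\<^esub>"
    using B.Jinter[OF c] mul_mod[OF x y] by blast
  then show ?thesis using rho_carr x y by (simp add: B.r_right_minus_eq)
qed

lemma rho_bij: "bij_betw rho (carrier R) (carrier R')"
  unfolding bij_betw_def
proof (intro conjI)
  show "inj_on rho (carrier R)"
  proof (rule inj_onI)
    fix x y assume x: "x \<in> carrier R" and y: "y \<in> carrier R" and e: "rho x = rho y"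
    have "coeffs n R \<iota> T x = coeffs n R \<iota> T y"
      using B.sig_inj A.co_Pseq[OF x] A.co_Pseq[OF y] e unfolding rho_def by blast
    then show "x = y" using A.co_Pseq[OF x] A.co_Pseq[OF y] by metis
  qed
  show "rho ` carrier R = carrier R'"
  proof (intro equalityI subsetI)
    fix z assume "z \<in> rho ` carrier R" then show "z \<in> carrier R'" using rho_carr by blast
  next
    fix z assume z: "z \<in> carrier R'"
    let ?x = "sigma R \<iota> T (coeffs n R' \<iota>' T' z)"
    have "?x \<in> carrier R" using A.sig_carr B.co_Pseq[OF z] by blast
    moreover have "rho ?x = z" unfolding rho_def using A.co_sig B.co_Pseq[OF z] by simp
    ultimately show "z \<in> rho ` carrier R" by (metis image_eqI)
  qed
qed

lemma part5: "\<exists>\<rho>. \<rho> \<in> ring_iso R R' \<and> \<rho> T = T' \<and> (\<forall>\<xi> \<in> Defs.roots n. \<rho> (\<iota> \<xi>) = \<iota>' \<xi>)"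
proof (intro exI conjI ballI)
  show "rho \<in> ring_iso R R'"
    by (rule ring_iso_memI) (auto simp: rho_carr rho_mul rho_add rho_one rho_bij)
  have "rho (T \<otimes>\<^bsub>R\<^esub> \<one>\<^bsub>R\<^esub>) = T' \<otimes>\<^bsub>R'\<^esub> rho \<one>\<^bsub>R\<^esub>" by (rule rho_T) simp
  then show "rho T = T'" using A.T_carr B.T_carr by (simp add: rho_one)
next
  fix \<xi> assume x: "\<xi> \<in> Defs.roots n"
  then have "\<xi> \<noteq> 0" "\<xi> \<in> roots_plus n" using roots_nz A.n1 by (auto simp: roots_plus_def)
  then show "rho (\<iota> \<xi>) = \<iota>' \<xi>" using rho_ip[of \<xi>] by (simp add: iota_p_def)
qed

end

theorem proposition5p6:
  fixes n :: nat and R :: "'a ring" and \<iota> :: "complex \<Rightarrow> 'a" and T :: 'a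
  assumes "n \<ge> 1"
    and "setting n R \<iota> T"
  shows
    "(\<forall>m. \<forall>z \<in> carrier R. \<exists>a b. a \<in> carrier R \<and> b \<in> Jid R T m \<and> z = a \<oplus>\<^bsub>R\<^esub> b
          \<and> deg_less n R \<iota> T a m \<and>
          (\<forall>a' b'. a' \<in> carrier R \<and> b' \<in> Jid R T m \<and> z = a' \<oplus>\<^bsub>R\<^esub> b'
              \<and> deg_less n R \<iota> T a' m \<longrightarrow> a' = a \<and> b' = b))
   \<and> (\<forall>m. ring (R Quot Jid R T m) \<and> finite (carrier (R Quot Jid R T m)) \<and>
          bij_betw (\<lambda>\<alpha>. Jid R T m +>\<^bsub>R\<^esub> sigma R \<iota> T \<alpha>)
            {\<alpha> \<in> Pseq n. \<forall>j \<ge> m. \<alpha> j = 0} (carrier (R Quot Jid R T m)))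
   \<and> (field (R Quot Jid R T 1) \<and> card (carrier (R Quot Jid R T 1)) = n + 1 \<and>
        bij_betw (\<lambda>\<alpha>. Jid R T 1 +>\<^bsub>R\<^esub> iota_p R \<iota> \<alpha>) (roots_plus n)
          (carrier (R Quot Jid R T 1)) \<and>
        (\<forall>\<alpha> \<in> roots_plus n. \<forall>\<beta> \<in> roots_plus n.
            iota_p R \<iota> (\<alpha> * \<beta>) = iota_p R \<iota> \<alpha> \<otimes>\<^bsub>R\<^esub> iota_p R \<iota> \<beta>))
   \<and> (canon R T \<in> carrier R \<rightarrow> invlim R T \<and> inj_on (canon R T) (carrier R))
   \<and> (\<forall>(R' :: 'b ring) \<iota>' T'. setting n R' \<iota>' T' \<and>
          (\<forall>\<xi> \<in> roots n. hold n R' \<iota>' T' \<xi> = hold n R \<iota> T \<xi>) \<longrightarrow>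
          (\<exists>\<rho>. \<rho> \<in> ring_iso R R' \<and> \<rho> T = T' \<and> (\<forall>\<xi> \<in> roots n. \<rho> (\<iota> \<xi>) = \<iota>' \<xi>)))"
proof -
  have gsR: "gs R n \<iota> T" using assms unfolding setting_def by (auto intro!: gs.intro gs_axioms.intro)
  interpret gs R n \<iota> T by (rule gsR)
  have Q1: "\<forall>m. \<forall>z \<in> carrier R. \<exists>a b. a \<in> carrier R \<and> b \<in> Jid R T m \<and> z = a \<oplus>\<^bsub>R\<^esub> b
          \<and> deg_less n R \<iota> T a m \<and>
          (\<forall>a' b'. a' \<in> carrier R \<and> b' \<in> Jid R T m \<and> z = a' \<oplus>\<^bsub>R\<^esub> b'
              \<and> deg_less n R \<iota> T a' m \<longrightarrow> a' = a \<and> b' = b)"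
  proof (intro allI ballI)
    fix m z assume z: "z \<in> carrier R"
    obtain a b where ab: "a \<in> carrier R" "b \<in> Jid R T m" "z = a \<oplus>\<^bsub>R\<^esub> b" "deg_less n R \<iota> T a m"
      using part1_exist[OF z] by blast
    have U: "a' = a \<and> b' = b" if h: "a' \<in> carrier R \<and> b' \<in> Jid R T m \<and> z = a' \<oplus>\<^bsub>R\<^esub> b' \<and> deg_less n R \<iota> T a' m" for a' b'
    proof -
      have "a' \<oplus>\<^bsub>R\<^esub> b' = a \<oplus>\<^bsub>R\<^esub> b" using h ab by simp
      then show ?thesis using part1_uniq[of a' a b' m b] h ab by blast
    qed
    show "\<exists>a b. a \<in> carrier R \<and> b \<in> Jid R T m \<and> z = a \<oplus>\<^bsub>R\<^esub> b \<and> deg_less n R \<iota> T a m \<and>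
          (\<forall>a' b'. a' \<in> carrier R \<and> b' \<in> Jid R T m \<and> z = a' \<oplus>\<^bsub>R\<^esub> b'
              \<and> deg_less n R \<iota> T a' m \<longrightarrow> a' = a \<and> b' = b)"
      using ab U by blast
  qed
  have Q2: "\<forall>m. ring (R Quot Jid R T m) \<and> finite (carrier (R Quot Jid R T m)) \<and>
          bij_betw (\<lambda>\<alpha>. Jid R T m +>\<^bsub>R\<^esub> sigma R \<iota> T \<alpha>)
            {\<alpha> \<in> Pseq n. \<forall>j \<ge> m. \<alpha> j = 0} (carrier (R Quot Jid R T m))"
    using part2 by blast
  have Q5: "\<forall>(R' :: 'b ring) \<iota>' T'. setting n R' \<iota>' T' \<and>
          (\<forall>\<xi> \<in> Defs.roots n. hold n R' \<iota>' T' \<xi> = hold n R \<iota> T \<xi>) \<longrightarrow>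
          (\<exists>\<rho>. \<rho> \<in> ring_iso R R' \<and> \<rho> T = T' \<and> (\<forall>\<xi> \<in> Defs.roots n. \<rho> (\<iota> \<xi>) = \<iota>' \<xi>))"
  proof (intro allI impI)
    fix R' :: "'b ring" and \<iota>' T'
    assume h: "setting n R' \<iota>' T' \<and> (\<forall>\<xi> \<in> Defs.roots n. hold n R' \<iota>' T' \<xi> = hold n R \<iota> T \<xi>)"
    have gsR': "gs R' n \<iota>' T'" using h assms(1) unfolding setting_def by (auto intro!: gs.intro gs_axioms.intro)
    have "gs2 R n \<iota> T R' \<iota>' T'"
      by (intro gs2.intro gsR gsR' gs2_axioms.intro) (use h in blast)
    then show "\<exists>\<rho>. \<rho> \<in> ring_iso R R' \<and> \<rho> T = T' \<and> (\<forall>\<xi> \<in> Defs.roots n. \<rho> (\<iota> \<xi>) = \<iota>' \<xi>)"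
      by (rule gs2.part5)
  qed
  show ?thesis using Q1 Q2 part3 part4 Q5 by blast
qed

end
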